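(* Let $d\ge 1$, $\sigma>0$, and let $A_0,A_1\in\mathbb{R}^{d\times d}$ be constant matrices (not assumed to commute). Let $Z:\mathbb{R}\to\mathbb{R}^{d\times d}$ be the function defined in the context. Then \[ \dot Z(\vartheta)=A_0Z(\vartheta-\sigma)+Z(\vartheta-\sigma)A_1\qquad\text{for all }\vartheta\in(-\infty,\infty), \] where at the points $\vartheta=k\sigma$, $k\in\{-1,0,1,2,\dots\}$, the derivative $\dot Z(\vartheta)$ is understood as the right-hand derivative.
   Context: $\Theta$ and $I$ denote the $d\times d$ zero and identity matrices. Define matrices $Q_{r+1}(r\sigma)$, $r=0,1,2,\dots$, recursively by $Q_1(0)=I$ and $Q_{r+1}(r\sigma)=A_0Q_r((r-1)\sigma)+Q_r((r-1)\sigma)A_1$ for $r\ge 1$. Define $Z:\mathbb{R}\to\mathbb{R}^{d\times d}$ by $Z(\vartheta)=\Theta$ for $\vartheta<-\sigma$, and, for each integer $u\ge 0$ and $\vartheta\in[(u-1)\sigma,u\sigma)$, \[ Z(\vartheta)=\sum_{r=0}^{u}Q_{r+1}(r\sigma)\frac{(\vartheta-(r-1)\sigma)^r}{r!} \] (so $Z(\vartheta)=I$ on $[-\sigma,0)$, $Z(\vartheta)=I+Q_2(\sigma)\vartheta$ on $[0,\sigma)$, etc.). *)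

theory Defs
  imports "HOL-Analysis.Analysis"
begin

text \<open>Qm A0 A1 r is the matrix Q_{r+1}(r sigma) of the paper:
  Q_1(0) = I, Q_{r+1}(r sigma) = A0 Q_r((r-1) sigma) + Q_r((r-1) sigma) A1.\<close>
fun Qm :: "real^'n^'n \<Rightarrow> real^'n^'n \<Rightarrow> nat \<Rightarrow> real^'n^'n" where
  "Qm A0 A1 0 = mat 1"
| "Qm A0 A1 (Suc r) = A0 ** Qm A0 A1 r + Qm A0 A1 r ** A1"

definition Zfun :: "real^'n^'n \<Rightarrow> real^'n^'n \<Rightarrow> real \<Rightarrow> real \<Rightarrow> real^'n^'n" where
  "Zfun A0 A1 \<sigma> \<theta> =
     (if \<theta> < - \<sigma> then 0
      else (let u = nat (\<lfloor>\<theta> / \<sigma>\<rfloor> + 1) in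
            \<Sum>r\<in>{0..u}. ((\<theta> - (real r - 1) * \<sigma>) ^ r / fact r) *\<^sub>R Qm A0 A1 r))"

end

theory Submission
  imports Defs
begin

definition Pf :: "real^'n^'n \<Rightarrow> real^'n^'n \<Rightarrow> real \<Rightarrow> nat \<Rightarrow> real \<Rightarrow> real^'n^'n" where
  "Pf A0 A1 \<sigma> u \<theta> = (\<Sum>r\<in>{0..u}. ((\<theta> - (real r - 1) * \<sigma>) ^ r / fact r) *\<^sub>R Qm A0 A1 r)"

lemma mat_rdistrib: "((B + C) ** (A::real^'n^'n)) = (B ** A) + (C ** A)"
  by (vector matrix_matrix_mult_def sum.distrib distrib_right)

lemma mat_rscale: "(k *\<^sub>R B) ** (A::real^'n^'n) = k *\<^sub>R (B ** A)"
  by (simp add: scalar_matrix_assoc)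

lemma mat_lscale: "(A::real^'n^'n) ** (k *\<^sub>R B) = k *\<^sub>R (A ** B)"
  by (simp add: matrix_scalar_ac scalar_matrix_assoc)

lemma term_deriv:
  "((\<lambda>t. ((t - real u * \<sigma>) ^ Suc u / fact (Suc u)) *\<^sub>R M) has_vector_derivative
     ((\<theta> - real u * \<sigma>) ^ u / fact u) *\<^sub>R M) (at \<theta> within S)"
proof -
  have "((\<lambda>t. (t - real u * \<sigma>) ^ Suc u / fact (Suc u)) has_real_derivative
          (\<theta> - real u * \<sigma>) ^ u / fact u) (at \<theta> within S)"
    apply (rule derivative_eq_intros refl | simp)+
    done
  from has_vector_derivative_scaleR[OF this has_vector_derivative_const[of M]]
  show ?thesis by simp
qed

lemma P_deriv:
  "(Pf A0 A1 \<sigma> u has_vector_derivative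
     (if u = 0 then 0 else A0 ** Pf A0 A1 \<sigma> (u - 1) (\<theta> - \<sigma>) + Pf A0 A1 \<sigma> (u - 1) (\<theta> - \<sigma>) ** A1))
     (at \<theta> within S)"
proof (induction u)
  case 0
  then show ?case by (simp add: Pf_def)
next
  case (Suc u)
  have eq: "Pf A0 A1 \<sigma> (Suc u) = (\<lambda>t. Pf A0 A1 \<sigma> u t +
       ((t - real u * \<sigma>) ^ Suc u / fact (Suc u)) *\<^sub>R Qm A0 A1 (Suc u))"
    by (rule ext) (simp add: Pf_def algebra_simps)
  have t: "(\<theta> - \<sigma> - (real u - 1) * \<sigma>) = \<theta> - real u * \<sigma>" by (simp add: algebra_simps)
  have rhs: "A0 ** Pf A0 A1 \<sigma> u (\<theta> - \<sigma>) + Pf A0 A1 \<sigma> u (\<theta> - \<sigma>) ** A1 =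
     (if u = 0 then 0 else A0 ** Pf A0 A1 \<sigma> (u - 1) (\<theta> - \<sigma>) + Pf A0 A1 \<sigma> (u - 1) (\<theta> - \<sigma>) ** A1)
     + ((\<theta> - real u * \<sigma>) ^ u / fact u) *\<^sub>R Qm A0 A1 (Suc u)"
  proof (cases u)
    case 0
    then show ?thesis by (simp add: Pf_def)
  next
    case (Suc v)
    have "Pf A0 A1 \<sigma> u (\<theta> - \<sigma>) = Pf A0 A1 \<sigma> v (\<theta> - \<sigma>) + ((\<theta> - \<sigma> - (real u - 1) * \<sigma>) ^ u / fact u) *\<^sub>R Qm A0 A1 u"
      unfolding Pf_def Suc by (rule sum.atLeast0_atMost_Suc)
    also have "\<dots> = Pf A0 A1 \<sigma> v (\<theta> - \<sigma>) + ((\<theta> - real u * \<sigma>) ^ u / fact u) *\<^sub>R Qm A0 A1 u"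
      by (simp only: t)
    finally have "Pf A0 A1 \<sigma> u (\<theta> - \<sigma>) = Pf A0 A1 \<sigma> v (\<theta> - \<sigma>) + ((\<theta> - real u * \<sigma>) ^ u / fact u) *\<^sub>R Qm A0 A1 u" .
    then show ?thesis using Suc
      by (simp add: matrix_add_ldistrib mat_rdistrib mat_lscale mat_rscale scaleR_add_right algebra_simps)
  qed
  show ?case
    apply (subst eq)
    apply (simp only: diff_Suc_1 Suc_not_Zero if_False)
    apply (subst rhs)
    apply (rule has_vector_derivative_add[OF Suc.IH term_deriv])
    done
qed

lemma Z_eq_P:
  assumes "\<sigma> > 0" "(real u - 1) * \<sigma> \<le> \<theta>" "\<theta> < real u * \<sigma>"
  shows "Zfun A0 A1 \<sigma> \<theta> = Pf A0 A1 \<sigma> u \<theta>"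
proof -
  have "real u - 1 \<le> \<theta> / \<sigma>" "\<theta> / \<sigma> < real u"
    using assms by (auto simp: field_simps)
  then have "\<lfloor>\<theta> / \<sigma>\<rfloor> = int u - 1" by (simp add: floor_eq_iff)
  then have "nat (\<lfloor>\<theta> / \<sigma>\<rfloor> + 1) = u" by simp
  moreover have "\<not> \<theta> < - \<sigma>"
  proof -
    have "0 \<le> real u * \<sigma>" using assms(1) by simp
    then show ?thesis using assms(2) by (simp add: algebra_simps)
  qed
  ultimately show ?thesis by (simp add: Zfun_def Pf_def Let_def)
qed

lemma Z_neg: "\<theta> < - \<sigma> \<Longrightarrow> Zfun A0 A1 \<sigma> \<theta> = 0"
  by (simp add: Zfun_def)

theorem theorem1:
  fixes A0 A1 :: "real^'n^'n" and \<sigma> :: real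
  assumes "\<sigma> > 0"
  shows "\<forall>\<theta>::real.
           (Zfun A0 A1 \<sigma> has_vector_derivative
              (A0 ** Zfun A0 A1 \<sigma> (\<theta> - \<sigma>) + Zfun A0 A1 \<sigma> (\<theta> - \<sigma>) ** A1))
             (at \<theta> within {\<theta>..})
         \<and> ((\<forall>k::int. k \<ge> -1 \<longrightarrow> \<theta> \<noteq> real_of_int k * \<sigma>) \<longrightarrow>
           (Zfun A0 A1 \<sigma> has_vector_derivative
              (A0 ** Zfun A0 A1 \<sigma> (\<theta> - \<sigma>) + Zfun A0 A1 \<sigma> (\<theta> - \<sigma>) ** A1))
             (at \<theta>))"
proof
  fix \<theta> :: real
  let ?Z = "Zfun A0 A1 \<sigma>"
  let ?R = "A0 ** ?Z (\<theta> - \<sigma>) + ?Z (\<theta> - \<sigma>) ** A1"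
  show "(?Z has_vector_derivative ?R) (at \<theta> within {\<theta>..}) \<and>
        ((\<forall>k::int. k \<ge> -1 \<longrightarrow> \<theta> \<noteq> real_of_int k * \<sigma>) \<longrightarrow> (?Z has_vector_derivative ?R) (at \<theta>))"
  proof (cases "\<theta> < - \<sigma>")
    case True
    have R0: "?R = 0" using True assms by (simp add: Z_neg)
    have d: "((\<lambda>_. 0::real^'n^'n) has_vector_derivative 0) (at \<theta>)" by simp
    have at: "(?Z has_vector_derivative ?R) (at \<theta>)"
      unfolding R0
      by (rule has_vector_derivative_transform_within_open[OF d, of "{..< -\<sigma>}"])
        (use True in \<open>auto simp: Z_neg\<close>)
    then show ?thesis using has_vector_derivative_at_within by blast
  next
    case False
    define u where "u = nat (\<lfloor>\<theta> / \<sigma>\<rfloor> + 1)"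
    have ge: "-1 \<le> \<theta> / \<sigma>" using False assms by (simp add: field_simps)
    then have fl: "\<lfloor>\<theta> / \<sigma>\<rfloor> + 1 \<ge> 0" by linarith
    have lo: "real u - 1 \<le> \<theta> / \<sigma>" using fl unfolding u_def by linarith
    have hi: "\<theta> / \<sigma> < real u" using fl unfolding u_def by linarith
    have lo': "(real u - 1) * \<sigma> \<le> \<theta>" using lo assms by (simp add: field_simps)
    have hi': "\<theta> < real u * \<sigma>" using hi assms by (simp add: field_simps)
    have RP: "?R = (if u = 0 then 0 else A0 ** Pf A0 A1 \<sigma> (u - 1) (\<theta> - \<sigma>) + Pf A0 A1 \<sigma> (u - 1) (\<theta> - \<sigma>) ** A1)"
    proof (cases u)
      case 0
      have "\<theta> - \<sigma> < - \<sigma>" using hi' 0 by simp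
      then show ?thesis using 0 by (simp add: Z_neg)
    next
      case (Suc v)
      have "?Z (\<theta> - \<sigma>) = Pf A0 A1 \<sigma> v (\<theta> - \<sigma>)"
        by (rule Z_eq_P[OF assms]) (use lo' hi' Suc in \<open>auto simp: algebra_simps\<close>)
      then show ?thesis using Suc by simp
    qed
    have w: "(?Z has_vector_derivative ?R) (at \<theta> within {\<theta>..})"
      unfolding RP
    proof (rule has_vector_derivative_transform_within[OF P_deriv])
      show "0 < real u * \<sigma> - \<theta>" using hi' by simp
      show "\<theta> \<in> {\<theta>..}" by simp
      fix x' assume "x' \<in> {\<theta>..}" "dist x' \<theta> < real u * \<sigma> - \<theta>"
      then show "Pf A0 A1 \<sigma> u x' = ?Z x'"
        using lo' by (intro Z_eq_P[OF assms, symmetric]) (auto simp: dist_real_def)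
    qed
    have "(?Z has_vector_derivative ?R) (at \<theta>)"
      if nk: "\<forall>k::int. k \<ge> -1 \<longrightarrow> \<theta> \<noteq> real_of_int k * \<sigma>"
    proof -
      have "\<theta> \<noteq> real_of_int (int u - 1) * \<sigma>" using nk[rule_format, of "int u - 1"] by simp
      moreover have "real_of_int (int u - 1) = real u - 1" by simp
      ultimately have "\<theta> \<noteq> (real u - 1) * \<sigma>" by simp
      then have lo2: "(real u - 1) * \<sigma> < \<theta>" using lo' by simp
      show ?thesis
        unfolding RP
      proof (rule has_vector_derivative_transform_within_open[OF P_deriv, of "{(real u - 1) * \<sigma> <..< real u * \<sigma>}"])
        show "\<theta> \<in> {(real u - 1) * \<sigma> <..< real u * \<sigma>}" using lo2 hi' by simp
        fix y assume "y \<in> {(real u - 1) * \<sigma> <..< real u * \<sigma>}"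
        then show "Pf A0 A1 \<sigma> u y = ?Z y"
          by (intro Z_eq_P[OF assms, symmetric]) auto
      qed simp
    qed
    then show ?thesis using w by blast
  qed
qed

end
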